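(* For every $n\equiv 13 \pmod{16}$ (with $n\geq 13$), there exists an almost 2-perfect maximum 8-cycle packing of $K_n$.
   Context: An 8-cycle packing of $K_n$ on vertex set $\mathcal{X}$ is a triple $(\mathcal{X},\mathcal{C},\mathcal{L})$ with $\mathcal{C}$ a collection of pairwise edge-disjoint 8-cycles of $K_n$ and leave $\mathcal{L}$ the set of edges in no cycle of $\mathcal{C}$; it is maximum if $|\mathcal{L}|$ is minimum among all 8-cycle packings of $K_n$. For an 8-cycle $C$, an inside 8-cycle of $C$ is an 8-cycle on the same vertex set sharing no edge with $C$. The packing is almost 2-perfect if one can choose for each $C\in\mathcal{C}$ an inside 8-cycle $C'$ such that $(\mathcal{X},\{C'\},\mathcal{L})$ is again an 8-cycle packing with the same leave. *)

theory Defs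
  imports Main
begin

definition complete_edges :: "'a set \<Rightarrow> 'a set set" where
  "complete_edges X = {{u, v} | u v. u \<in> X \<and> v \<in> X \<and> u \<noteq> v}"

definition cycle_edges :: "'a list \<Rightarrow> 'a set set" where
  "cycle_edges vs = {{vs ! i, vs ! ((i + 1) mod length vs)} | i. i < length vs}"

definition is_8cycle :: "'a set \<Rightarrow> 'a set set \<Rightarrow> bool" where
  "is_8cycle X C \<longleftrightarrow> (\<exists>vs. length vs = 8 \<and> distinct vs \<and> set vs \<subseteq> X \<and> C = cycle_edges vs)"

definition cyc_vertices :: "'a set set \<Rightarrow> 'a set" where
  "cyc_vertices C = \<Union> C"

definition is_8cycle_packing :: "'a set \<Rightarrow> 'a set set set \<Rightarrow> 'a set set \<Rightarrow> bool" where
  "is_8cycle_packing X CC L \<longleftrightarrow>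
     (\<forall>C \<in> CC. is_8cycle X C) \<and>
     (\<forall>C1 \<in> CC. \<forall>C2 \<in> CC. C1 \<noteq> C2 \<longrightarrow> C1 \<inter> C2 = {}) \<and>
     L = complete_edges X - \<Union> CC"

definition is_max_8cycle_packing :: "'a set \<Rightarrow> 'a set set set \<Rightarrow> 'a set set \<Rightarrow> bool" where
  "is_max_8cycle_packing X CC L \<longleftrightarrow>
     is_8cycle_packing X CC L \<and>
     (\<forall>CC' L'. is_8cycle_packing X CC' L' \<longrightarrow> card L \<le> card L')"

definition is_inside_8cycle :: "'a set \<Rightarrow> 'a set set \<Rightarrow> 'a set set \<Rightarrow> bool" where
  "is_inside_8cycle X C C' \<longleftrightarrow>
     is_8cycle X C' \<and> cyc_vertices C' = cyc_vertices C \<and> C \<inter> C' = {}"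

definition almost_2perfect :: "'a set \<Rightarrow> 'a set set set \<Rightarrow> 'a set set \<Rightarrow> bool" where
  "almost_2perfect X CC L \<longleftrightarrow>
     (\<exists>f. (\<forall>C \<in> CC. is_inside_8cycle X C (f C)) \<and>
          (\<forall>C1 \<in> CC. \<forall>C2 \<in> CC. C1 \<noteq> C2 \<longrightarrow> f C1 \<inter> f C2 = {}) \<and>
          is_8cycle_packing X (f ` CC) L)"

end

theory Submission
  imports Defs
begin


definition ce :: "'a list \<Rightarrow> ('a \<times> 'a) list" where
  "ce vs = map (\<lambda>i. (vs!i, vs!((i+1) mod length vs))) [0..<length vs]"

definition hasE :: "'a \<Rightarrow> 'a \<Rightarrow> 'a list \<Rightarrow> bool" where
  "hasE x y vs \<longleftrightarrow> (x,y) \<in> set (ce vs) \<or> (y,x) \<in> set (ce vs)"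

lemma cycle_edges_ce: "cycle_edges vs = (\<lambda>(a,b). {a,b}) ` set (ce vs)"
  unfolding cycle_edges_def ce_def by auto

lemma mem_cycle_edges: "{x,y} \<in> cycle_edges vs \<longleftrightarrow> hasE x y vs"
  unfolding cycle_edges_ce hasE_def by (auto simp: doubleton_eq_iff)

lemma ce_map: "ce (map g vs) = map (\<lambda>(a,b). (g a, g b)) (ce vs)"
proof -
  have "\<forall>x\<in>{0..<length vs}. map g vs ! (Suc x mod length vs) = g (vs ! (Suc x mod length vs))"
    by (auto intro!: nth_map mod_less_divisor)
  then show ?thesis by (simp add: ce_def)
qed

lemma cycle_edges_map: "cycle_edges (map g vs) = (\<lambda>e. g ` e) ` cycle_edges vs"
  unfolding cycle_edges_ce ce_map by (force simp: image_image image_iff)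

lemma cyc_vertices_ce: "vs \<noteq> [] \<Longrightarrow> cyc_vertices (cycle_edges vs) = set vs"
proof -
  assume ne: "vs \<noteq> []"
  have "cyc_vertices (cycle_edges vs) \<subseteq> set vs"
    unfolding cyc_vertices_def cycle_edges_def using ne by auto
  moreover have "set vs \<subseteq> cyc_vertices (cycle_edges vs)"
  proof
    fix x assume "x \<in> set vs"
    then obtain i where i: "i < length vs" "x = vs!i" by (auto simp: in_set_conv_nth)
    then show "x \<in> cyc_vertices (cycle_edges vs)"
      unfolding cyc_vertices_def cycle_edges_def by blast
  qed
  ultimately show ?thesis by blast
qed

lemma len8: "length vs = 8 \<Longrightarrow> vs = [vs!0,vs!1,vs!2,vs!3,vs!4,vs!5,vs!6,vs!7]"
proof -
  assume "length vs = 8"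
  then have "vs = map (\<lambda>i. vs!i) [0..<8]" by (metis map_nth)
  also have "\<dots> = [vs!0,vs!1,vs!2,vs!3,vs!4,vs!5,vs!6,vs!7]" by (simp add: upt_rec numeral_eq_Suc)
  finally show ?thesis .
qed

lemma ce8: "ce [a0,a1,a2,a3,a4,a5,a6,a7] = [(a0,a1),(a1,a2),(a2,a3),(a3,a4),(a4,a5),(a5,a6),(a6,a7),(a7,a0)]"
  by (simp add: ce_def upt_rec)

lemma cycle_edges8: "cycle_edges [a0,a1,a2,a3,a4,a5,a6,a7] =
   {{a0,a1},{a1,a2},{a2,a3},{a3,a4},{a4,a5},{a5,a6},{a6,a7},{a7,a0}}"
  unfolding cycle_edges_ce ce8 by simp

lemma card_cyc8: assumes l: "length vs = 8" and d: "distinct vs" shows "card (cycle_edges vs) = 8"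
proof -
  have eq: "cycle_edges vs = (\<lambda>i. {vs!i, vs!((i+1) mod 8)}) ` {..<8}"
    unfolding cycle_edges_def l by auto
  have "inj_on (\<lambda>i. {vs!i, vs!((i+1) mod 8)}) {..<8}"
  proof (rule inj_onI)
    fix i j assume i: "i \<in> {..<8::nat}" and j: "j \<in> {..<8::nat}"
      and e: "{vs!i, vs!((i+1) mod 8)} = {vs!j, vs!((j+1) mod 8)}"
    have ii: "(i+1) mod 8 < length vs" "i < length vs" using i l by auto
    have jj: "(j+1) mod 8 < length vs" "j < length vs" using j l by auto
    from e have "(vs!i = vs!j \<and> vs!((i+1) mod 8) = vs!((j+1) mod 8)) \<or> (vs!i = vs!((j+1) mod 8) \<and> vs!((i+1) mod 8) = vs!j)"
      by (auto simp: doubleton_eq_iff)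
    then show "i = j"
    proof
      assume "vs!i = vs!j \<and> vs!((i+1) mod 8) = vs!((j+1) mod 8)"
      then show ?thesis using nth_eq_iff_index_eq[OF d ii(2) jj(2)] by blast
    next
      assume a: "vs!i = vs!((j+1) mod 8) \<and> vs!((i+1) mod 8) = vs!j"
      have "i = (j+1) mod 8" using a nth_eq_iff_index_eq[OF d ii(2) jj(1)] by blast
      moreover have "(i+1) mod 8 = j" using a nth_eq_iff_index_eq[OF d ii(1) jj(2)] by blast
      ultimately show ?thesis using i j by simp presburger
    qed
  qed
  then show ?thesis unfolding eq by (simp add: card_image)
qed

lemma cyc_sub: assumes l: "length vs = 8" and d: "distinct vs" and s: "set vs \<subseteq> X"
  shows "cycle_edges vs \<subseteq> complete_edges X"
proof
  fix e assume "e \<in> cycle_edges vs"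
  then obtain i where i: "i < 8" and e: "e = {vs!i, vs!((i+1) mod 8)}" unfolding cycle_edges_def l by auto
  have a: "vs!i \<in> X" "vs!((i+1) mod 8) \<in> X" using i l s nth_mem[of i vs] nth_mem[of "(i+1) mod 8" vs] by auto
  have "i \<noteq> (i+1) mod 8" using i by presburger
  then have "vs!i \<noteq> vs!((i+1) mod 8)" using nth_eq_iff_index_eq[OF d] i l by auto
  then show "e \<in> complete_edges X" unfolding complete_edges_def e using a by blast
qed

lemma is8_sub: "is_8cycle X C \<Longrightarrow> C \<subseteq> complete_edges X \<and> card C = 8"
  unfolding is_8cycle_def using cyc_sub card_cyc8 by blast

lemma finite_ce: "finite X \<Longrightarrow> finite (complete_edges X)"
proof -
  assume f: "finite X"
  have "complete_edges X \<subseteq> Pow X" unfolding complete_edges_def by blast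
  moreover have "finite (Pow X)" using f by simp
  ultimately show ?thesis by (rule finite_subset)
qed

lemma packing_card:
  assumes fin: "finite X" and pk: "is_8cycle_packing X CC L"
  shows "card L + 8 * card CC = card (complete_edges X)"
proof -
  let ?E = "complete_edges X"
  have fE: "finite ?E" using finite_ce fin by blast
  have sub: "\<forall>C\<in>CC. C \<subseteq> ?E \<and> card C = 8" using pk is8_sub unfolding is_8cycle_packing_def by metis
  have "CC \<subseteq> Pow ?E" using sub by blast
  moreover have "finite (Pow ?E)" using fE by simp
  ultimately have fCC: "finite CC" by (rule finite_subset)
  have disj: "pairwise disjnt CC" using pk unfolding is_8cycle_packing_def pairwise_def disjnt_def by blast
  have fin2: "\<forall>A\<in>CC. finite A"
  proof
    fix A assume "A \<in> CC" then have "A \<subseteq> ?E" using sub by blast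
    then show "finite A" using fE by (rule finite_subset)
  qed
  have "card (\<Union>CC) = sum card CC"
    using card_Union_disjoint[OF disj] fin2 by blast
  also have "\<dots> = sum (\<lambda>_. 8) CC" using sub by (intro sum.cong) auto
  also have "\<dots> = 8 * card CC" by simp
  finally have cU: "card (\<Union>CC) = 8 * card CC" .
  have US: "\<Union>CC \<subseteq> ?E" using sub by blast
  have L: "L = ?E - \<Union>CC" using pk unfolding is_8cycle_packing_def by blast
  have fU: "finite (\<Union>CC)" using US fE by (rule finite_subset)
  have "card L = card ?E - card (\<Union>CC)" unfolding L by (rule card_Diff_subset[OF fU US])
  moreover have "card (\<Union>CC) \<le> card ?E" using fE US by (rule card_mono)
  ultimately show ?thesis using cU by simp
qed

lemma main_abstract:
  fixes X :: "'a set" and P :: "('a list \<times> 'a list) set" and L :: "'a set set"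
  assumes fin: "finite X"
   and P1: "\<And>c d. (c,d) \<in> P \<Longrightarrow> length c = 8 \<and> distinct c \<and> set c \<subseteq> X \<and> length d = 8 \<and> distinct d
             \<and> set d = set c \<and> cycle_edges c \<inter> cycle_edges d = {}"
   and P2: "\<And>p q. p \<in> P \<Longrightarrow> q \<in> P \<Longrightarrow> p \<noteq> q \<Longrightarrow> cycle_edges (fst p) \<inter> cycle_edges (fst q) = {}"
   and P3: "\<And>p q. p \<in> P \<Longrightarrow> q \<in> P \<Longrightarrow> p \<noteq> q \<Longrightarrow> cycle_edges (snd p) \<inter> cycle_edges (snd q) = {}"
   and U1: "(\<Union>p\<in>P. cycle_edges (fst p)) = complete_edges X - L"
   and U2: "(\<Union>p\<in>P. cycle_edges (snd p)) = complete_edges X - L"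
   and LE: "L \<subseteq> complete_edges X" and cL: "card L = 6" and cE: "card (complete_edges X) mod 8 = 6"
  shows "\<exists>CC L. is_max_8cycle_packing X CC L \<and> almost_2perfect X CC L"
proof -
  define F where "F p = cycle_edges (fst p)" for p :: "'a list \<times> 'a list"
  define G where "G p = cycle_edges (snd p)" for p :: "'a list \<times> 'a list"
  have Pp: "length (fst p) = 8 \<and> distinct (fst p) \<and> set (fst p) \<subseteq> X \<and> length (snd p) = 8 \<and> distinct (snd p)
             \<and> set (snd p) = set (fst p) \<and> F p \<inter> G p = {}" if "p \<in> P" for p
    using P1[of "fst p" "snd p"] that unfolding F_def G_def by simp
  have Fc: "card (F p) = 8" if "p \<in> P" for p using Pp[OF that] card_cyc8 unfolding F_def by blast
  have Finj: "p = q" if "p \<in> P" "q \<in> P" "F p = F q" for p q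
  proof (rule ccontr)
    assume "p \<noteq> q"
    then have "F p \<inter> F q = {}" using P2 that unfolding F_def by blast
    then have "F p = {}" using that by simp
    then show False using Fc[OF that(1)] by simp
  qed
  define f where "f C = G (THE p. p \<in> P \<and> F p = C)" for C
  have fF: "f (F p) = G p" if "p \<in> P" for p
  proof -
    have "(THE q. q \<in> P \<and> F q = F p) = p"
      by (rule the_equality) (use that Finj in auto)
    then show ?thesis unfolding f_def by simp
  qed
  have is8F: "is_8cycle X (F p)" if "p \<in> P" for p
    unfolding is_8cycle_def F_def using Pp[OF that] by blast
  have is8G: "is_8cycle X (G p)" if "p \<in> P" for p
    unfolding is_8cycle_def G_def using Pp[OF that] by force
  have ELL: "complete_edges X - (complete_edges X - L) = L" using LE by blast
  have pk: "is_8cycle_packing X (F ` P) L"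
    unfolding is_8cycle_packing_def
  proof (intro conjI)
    show "\<forall>C\<in>F ` P. is_8cycle X C" using is8F by blast
    show "\<forall>C1\<in>F ` P. \<forall>C2\<in>F ` P. C1 \<noteq> C2 \<longrightarrow> C1 \<inter> C2 = {}" using P2 unfolding F_def by blast
    have "\<Union>(F ` P) = complete_edges X - L" using U1 unfolding F_def by simp
    then show "L = complete_edges X - \<Union>(F ` P)" using ELL by simp
  qed
  have fimg: "f ` F ` P = G ` P" using fF by (force simp: image_image)
  have pk2: "is_8cycle_packing X (f ` F ` P) L"
    unfolding is_8cycle_packing_def fimg
  proof (intro conjI)
    show "\<forall>C\<in>G ` P. is_8cycle X C" using is8G by blast
    show "\<forall>C1\<in>G ` P. \<forall>C2\<in>G ` P. C1 \<noteq> C2 \<longrightarrow> C1 \<inter> C2 = {}" using P3 unfolding G_def by blast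
    have "\<Union>(G ` P) = complete_edges X - L" using U2 unfolding G_def by simp
    then show "L = complete_edges X - \<Union>(G ` P)" using ELL by simp
  qed
  have max: "is_max_8cycle_packing X (F ` P) L"
    unfolding is_max_8cycle_packing_def
  proof (intro conjI allI impI)
    show "is_8cycle_packing X (F ` P) L" by (rule pk)
    fix CC' L' assume "is_8cycle_packing X CC' L'"
    then have "card L' + 8 * card CC' = card (complete_edges X)" using packing_card fin by blast
    then have "card L' mod 8 = 6" using cE by presburger
    then show "card L \<le> card L'" using cL by presburger
  qed
  have ap: "almost_2perfect X (F ` P) L"
    unfolding almost_2perfect_def
  proof (intro exI[of _ f] conjI)
    show "\<forall>C\<in>F ` P. is_inside_8cycle X C (f C)"
    proof
      fix C assume "C \<in> F ` P"
      then obtain p where p: "p \<in> P" "C = F p" by blast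
      have ne: "fst p \<noteq> []" "snd p \<noteq> []" using Pp[OF p(1)] by auto
      show "is_inside_8cycle X C (f C)"
        unfolding is_inside_8cycle_def p(2) fF[OF p(1)]
        using is8G[OF p(1)] Pp[OF p(1)] cyc_vertices_ce[OF ne(1)] cyc_vertices_ce[OF ne(2)]
        unfolding F_def G_def by auto
    qed
    show "\<forall>C1\<in>F ` P. \<forall>C2\<in>F ` P. C1 \<noteq> C2 \<longrightarrow> f C1 \<inter> f C2 = {}"
    proof (intro ballI impI)
      fix C1 C2 assume "C1 \<in> F ` P" "C2 \<in> F ` P" "C1 \<noteq> C2"
      then obtain p q where "p \<in> P" "q \<in> P" "C1 = F p" "C2 = F q" "p \<noteq> q" by blast
      then show "f C1 \<inter> f C2 = {}" using fF P3 unfolding G_def by simp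
    qed
    show "is_8cycle_packing X (f ` F ` P) L" by (rule pk2)
  qed
  show ?thesis using max ap by blast
qed


lemma ce_pow: "cycle_edges c \<subseteq> Pow (set c)"
proof -
  have "\<And>i. i<length c \<Longrightarrow> Suc i mod length c < length c" by (rule mod_less_divisor) (rule gr_zeroI, simp)
  then show ?thesis unfolding cycle_edges_def by (auto intro!: nth_mem)
qed

lemma disj_check: assumes h: "list_all (\<lambda>(a,b). \<not> hasE a b d) (ce c)" shows "cycle_edges c \<inter> cycle_edges d = {}"
proof (rule ccontr)
  assume "cycle_edges c \<inter> cycle_edges d \<noteq> {}"
  then obtain e where e: "e \<in> cycle_edges c" "e \<in> cycle_edges d" by blast
  from e(1) have "e \<in> (\<lambda>(a,b). {a,b}) ` set (ce c)" by (simp only: cycle_edges_ce)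
  then obtain x where x: "x \<in> set (ce c)" "e = (\<lambda>(a,b). {a,b}) x" by (rule imageE)
  obtain a b where xab: "x = (a,b)" by (cases x)
  have ab: "(a,b) \<in> set (ce c)" "e = {a,b}" using x xab by simp_all
  have "{a,b} \<in> cycle_edges d" using e(2) ab(2) by simp
  then have "hasE a b d" by (simp only: mem_cycle_edges)
  moreover have "\<forall>x\<in>set (ce c). (case x of (a,b) \<Rightarrow> \<not>hasE a b d)" using h by (simp add: list_all_iff)
  then have "case (a,b) of (a,b) \<Rightarrow> \<not>hasE a b d" using ab(1) by (rule bspec)
  ultimately show False by simp
qed

lemma map_disj:
  assumes "inj_on g S" "set c \<subseteq> S" "set d \<subseteq> S" "cycle_edges c \<inter> cycle_edges d = {}"
  shows "cycle_edges (map g c) \<inter> cycle_edges (map g d) = {}"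
proof -
  have i: "inj_on (image g) (Pow S)" using assms(1) by (rule inj_on_image_Pow)
  have a: "cycle_edges c \<subseteq> Pow S" "cycle_edges d \<subseteq> Pow S" using ce_pow assms(2,3) by blast+
  have "(image g) ` (cycle_edges c \<inter> cycle_edges d) = (image g) ` cycle_edges c \<inter> (image g) ` cycle_edges d"
    by (rule inj_on_image_Int[OF i a])
  then show ?thesis unfolding cycle_edges_map using assms(4) by simp
qed

definition chk1 :: "nat \<Rightarrow> (nat list \<times> nat list) list \<Rightarrow> bool" where
 "chk1 m Ps = list_all (\<lambda>(c,d). length c = 8 \<and> distinct c \<and> list_all (\<lambda>x. x<m) c \<and> length d = 8 \<and> distinct d
    \<and> list_all (\<lambda>x. x \<in> set c) d \<and> list_all (\<lambda>x. x \<in> set d) c \<and> list_all (\<lambda>(a,b). \<not> hasE a b d) (ce c)) Ps"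

definition chk2 :: "(nat list \<times> nat list) list \<Rightarrow> bool" where
 "chk2 Ps = list_all (\<lambda>p. list_all (\<lambda>q. p = q \<or> (list_all (\<lambda>(a,b). \<not> hasE a b (fst q)) (ce (fst p))
     \<and> list_all (\<lambda>(a,b). \<not> hasE a b (snd q)) (ce (snd p)))) Ps) Ps"

definition allE :: "(nat list \<times> nat list) list \<Rightarrow> (nat \<times> nat) list" where
 "allE Ps = concat (map (\<lambda>(c,d). ce c @ ce d) Ps)"

definition mapQ :: "(nat \<Rightarrow> nat) \<Rightarrow> (nat list \<times> nat list) list \<Rightarrow> (nat list \<times> nat list) set" where
 "mapQ g Ps = (\<lambda>(c,d). (map g c, map g d)) ` set Ps"

lemma block_a:
  assumes c1: "chk1 m Ps" and inj: "inj_on g {..<m}" and sub: "g ` {..<m} \<subseteq> X" and p: "(c,d) \<in> mapQ g Ps"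
  shows "length c = 8 \<and> distinct c \<and> set c \<subseteq> X \<and> length d = 8 \<and> distinct d
             \<and> set d = set c \<and> cycle_edges c \<inter> cycle_edges d = {}"
proof -
  obtain c0 d0 where cd: "(c0,d0) \<in> set Ps" "c = map g c0" "d = map g d0" using p unfolding mapQ_def by auto
  have h: "length c0 = 8 \<and> distinct c0 \<and> set c0 \<subseteq> {..<m} \<and> length d0 = 8 \<and> distinct d0 \<and> set d0 = set c0
     \<and> list_all (\<lambda>(a,b). \<not> hasE a b d0) (ce c0)"
    using c1 cd(1) unfolding chk1_def list_all_iff by fastforce
  have "set c0 \<subseteq> {..<m}" using h by simp
  then have ic: "inj_on g (set c0)" using inj by (intro inj_on_subset[OF inj])
  have "set d0 \<subseteq> {..<m}" using h by simp
  then have id: "inj_on g (set d0)" using inj by (intro inj_on_subset[OF inj])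
  have dj: "cycle_edges c0 \<inter> cycle_edges d0 = {}" using h by (intro disj_check) simp
  have "cycle_edges (map g c0) \<inter> cycle_edges (map g d0) = {}"
    using map_disj[OF inj _ _ dj] h by simp
  moreover have "set (map g c0) \<subseteq> X" using h sub by auto
  ultimately show ?thesis unfolding cd(2,3) using h ic id
    by (simp add: distinct_map)
qed

lemma block_b:
  assumes c1: "chk1 m Ps" and c2: "chk2 Ps" and inj: "inj_on g {..<m}"
    and p: "p \<in> mapQ g Ps" and q: "q \<in> mapQ g Ps" and ne: "p \<noteq> q"
  shows "cycle_edges (fst p) \<inter> cycle_edges (fst q) = {} \<and> cycle_edges (snd p) \<inter> cycle_edges (snd q) = {}"
proof -
  obtain p0 where p0: "p0 \<in> set Ps" "p = (map g (fst p0), map g (snd p0))" using p unfolding mapQ_def by auto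
  obtain q0 where q0: "q0 \<in> set Ps" "q = (map g (fst q0), map g (snd q0))" using q unfolding mapQ_def by auto
  have "p0 \<noteq> q0" using ne p0 q0 by auto
  then have dj: "list_all (\<lambda>(a,b). \<not> hasE a b (fst q0)) (ce (fst p0)) \<and> list_all (\<lambda>(a,b). \<not> hasE a b (snd q0)) (ce (snd p0))"
    using c2 p0(1) q0(1) unfolding chk2_def list_all_iff by blast
  have sb: "set (fst p0) \<subseteq> {..<m} \<and> set (snd p0) \<subseteq> {..<m}" if "p0 \<in> set Ps" for p0
    using c1 that unfolding chk1_def list_all_iff by fastforce
  have d1: "cycle_edges (fst p0) \<inter> cycle_edges (fst q0) = {}" using dj by (intro disj_check) simp
  have d2: "cycle_edges (snd p0) \<inter> cycle_edges (snd q0) = {}" using dj by (intro disj_check) simp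
  have s1: "set (fst p0) \<subseteq> {..<m}" "set (snd p0) \<subseteq> {..<m}" using sb[OF p0(1)] by simp_all
  have s2: "set (fst q0) \<subseteq> {..<m}" "set (snd q0) \<subseteq> {..<m}" using sb[OF q0(1)] by simp_all
  show ?thesis unfolding p0(2) q0(2) fst_conv snd_conv
    using map_disj[OF inj s1(1) s2(1) d1] map_disj[OF inj s1(2) s2(2) d2] by simp
qed

lemma block_c:
  assumes p: "p \<in> mapQ g Ps" and e: "e \<in> cycle_edges (fst p) \<union> cycle_edges (snd p)"
  shows "\<exists>a b. (a,b) \<in> set (allE Ps) \<and> e = {g a, g b}"
proof -
  obtain p0 where p0: "p0 \<in> set Ps" "p = (map g (fst p0), map g (snd p0))" using p unfolding mapQ_def by auto
  from e obtain a b where ab: "(a,b) \<in> set (ce (fst p0)) \<union> set (ce (snd p0))" "e = {g a, g b}"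
    unfolding p0(2) fst_conv snd_conv cycle_edges_ce ce_map by auto
  have "(a,b) \<in> set (allE Ps)" using ab(1) p0(1) unfolding allE_def by (cases p0) force
  then show ?thesis using ab(2) by blast
qed

lemma block_d1:
  assumes p0: "p0 \<in> set Ps" and h: "hasE x y (fst p0)"
  shows "\<exists>p\<in>mapQ g Ps. {g x, g y} \<in> cycle_edges (fst p)"
proof -
  let ?p = "(map g (fst p0), map g (snd p0))"
  have "?p \<in> mapQ g Ps" unfolding mapQ_def by (rule image_eqI[of _ _ p0]) (auto simp: case_prod_beta p0)
  moreover have "{g x, g y} \<in> cycle_edges (fst ?p)"
  proof -
    have a: "{x,y} \<in> cycle_edges (fst p0)" using h by (simp only: mem_cycle_edges)
    have "{g x, g y} = g ` {x,y}" by simp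
    then show ?thesis unfolding fst_conv cycle_edges_map using a by (metis imageI)
  qed
  ultimately show ?thesis by blast
qed

lemma block_d2:
  assumes p0: "p0 \<in> set Ps" and h: "hasE x y (snd p0)"
  shows "\<exists>p\<in>mapQ g Ps. {g x, g y} \<in> cycle_edges (snd p)"
proof -
  let ?p = "(map g (fst p0), map g (snd p0))"
  have "?p \<in> mapQ g Ps" unfolding mapQ_def by (rule image_eqI[of _ _ p0]) (auto simp: case_prod_beta p0)
  moreover have "{g x, g y} \<in> cycle_edges (snd ?p)"
  proof -
    have a: "{x,y} \<in> cycle_edges (snd p0)" using h by (simp only: mem_cycle_edges)
    have "{g x, g y} = g ` {x,y}" by simp
    then show ?thesis unfolding snd_conv cycle_edges_map using a by (metis imageI)
  qed
  ultimately show ?thesis by blast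
qed

definition P13 :: "(nat list \<times> nat list) list" where
 "P13 = zip [[0, 3, 12, 10, 7, 11, 6, 8], [0, 4, 1, 9, 10, 2, 12, 6], [0, 5, 2, 7, 1, 8, 11, 12], [0, 7, 5, 8, 2, 3, 1, 11], [0, 9, 5, 6, 3, 11, 4, 10], [1, 5, 10, 8, 9, 4, 7, 12], [1, 6, 4, 2, 11, 9, 3, 10], [2, 6, 7, 3, 8, 4, 12, 9], [5, 11, 10, 6, 9, 7, 8, 12]]
 [[0, 6, 12, 7, 3, 8, 11, 10], [0, 9, 2, 6, 1, 10, 4, 12], [0, 7, 5, 1, 12, 8, 2, 11], [0, 3, 11, 5, 2, 7, 1, 8], [0, 4, 6, 11, 9, 3, 10, 5], [1, 4, 8, 7, 10, 12, 5, 9], [1, 3, 2, 10, 6, 9, 4, 11], [2, 4, 7, 9, 8, 6, 3, 12], [5, 6, 7, 11, 12, 9, 10, 8]]"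

definition P17 :: "(nat list \<times> nat list) list" where
 "P17 = [([0, 2, 6, 14, 8, 1, 4, 5], [0, 6, 4, 14, 2, 1, 5, 8]), ([1, 3, 7, 15, 9, 2, 5, 6], [1, 7, 5, 15, 3, 2, 6, 9]), ([2, 4, 8, 16, 10, 3, 6, 7], [2, 8, 6, 16, 4, 3, 7, 10]), ([3, 5, 9, 0, 11, 4, 7, 8], [3, 9, 7, 0, 5, 4, 8, 11]), ([4, 6, 10, 1, 12, 5, 8, 9], [4, 10, 8, 1, 6, 5, 9, 12]), ([5, 7, 11, 2, 13, 6, 9, 10], [5, 11, 9, 2, 7, 6, 10, 13]), ([6, 8, 12, 3, 14, 7, 10, 11], [6, 12, 10, 3, 8, 7, 11, 14]), ([7, 9, 13, 4, 15, 8, 11, 12], [7, 13, 11, 4, 9, 8, 12, 15]), ([8, 10, 14, 5, 16, 9, 12, 13], [8, 14, 12, 5, 10, 9, 13, 16]), ([9, 11, 15, 6, 0, 10, 13, 14], [9, 15, 13, 6, 11, 10, 14, 0]), ([10, 12, 16, 7, 1, 11, 14, 15], [10, 16, 14, 7, 12, 11, 15, 1]), ([11, 13, 0, 8, 2, 12, 15, 16], [11, 0, 15, 8, 13, 12, 16, 2]), ([12, 14, 1, 9, 3, 13, 16, 0], [12, 1, 16, 9, 14, 13, 0, 3]), ([13, 15, 2, 10, 4, 14, 0, 1], [13, 2, 0, 10, 15, 14, 1, 4]), ([14, 16, 3, 11, 5, 15, 1, 2], [14, 3, 1, 11, 16, 15, 2, 5]), ([15, 0, 4, 12, 6, 16,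 2, 3], [15, 4, 2, 12, 0, 16, 3, 6]), ([16, 1, 5, 13, 7, 0, 3, 4], [16, 5, 3, 13, 1, 0, 4, 7])]"

definition P44 :: "(nat list \<times> nat list) list" where
 "P44 = [([0,4,1,5,2,6,3,7],[0,5,3,4,2,7,1,6]), ([0,5,3,4,2,7,1,6],[0,4,1,5,2,6,3,7])]"

definition L13 :: "(nat\<times>nat) list" where "L13 = [(0,1),(1,2),(0,2),(3,4),(4,5),(3,5)]"

lemma C13a: "chk1 13 P13 \<and> chk2 P13" by code_simp
lemma C13b: "list_all (\<lambda>y. list_all (\<lambda>x. (x,y) \<in> set L13 \<or> (list_ex (\<lambda>p. hasE x y (fst p)) P13 \<and> list_ex (\<lambda>p. hasE x y (snd p)) P13)) [0..<y]) [0..<13]" by code_simp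
lemma C13c: "list_all (\<lambda>(a,b). (a,b) \<notin> set L13 \<and> (b,a) \<notin> set L13 \<and> a < 13 \<and> b < 13 \<and> a \<noteq> b) (allE P13)" by code_simp
lemma C17a: "chk1 17 P17 \<and> chk2 P17" by code_simp
lemma C17b: "list_all (\<lambda>y. list_all (\<lambda>x. list_ex (\<lambda>p. hasE x y (fst p)) P17 \<and> list_ex (\<lambda>p. hasE x y (snd p)) P17) [0..<y]) [0..<17]" by code_simp
lemma C17c: "list_all (\<lambda>(a,b). a < 17 \<and> b < 17 \<and> a \<noteq> b) (allE P17)" by code_simp
lemma C44a: "chk1 8 P44 \<and> chk2 P44" by code_simp
lemma C44b: "list_all (\<lambda>x. list_all (\<lambda>y. list_ex (\<lambda>p. hasE x y (fst p)) P44 \<and> list_ex (\<lambda>p. hasE x y (snd p)) P44) [4..<8]) [0..<4]" by code_simp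
lemma C44c: "list_all (\<lambda>(a,b). (a<4 \<and> 4\<le>b \<and> b<8) \<or> (b<4 \<and> 4\<le>a \<and> a<8)) (allE P44)" by code_simp



definition key :: "nat \<Rightarrow> nat \<Rightarrow> nat \<times> nat \<times> nat \<times> nat \<times> nat" where
 "key u v = (if v < 13 then (0,0,0,0,0) else
   if u = 12 then (1,(v-13) div 16,0,0,0)
   else if u < 12 then (2,(v-13) div 16,0,((v-13) mod 16) div 4, u div 4)
   else if (u-13) div 16 = (v-13) div 16 then (1,(v-13) div 16,0,0,0)
   else (3,(u-13) div 16,(v-13) div 16,((u-13) mod 16) div 4,((v-13) mod 16) div 4))"

definition kk :: "nat set \<Rightarrow> nat \<times> nat \<times> nat \<times> nat \<times> nat" where
 "kk e = key (Min e) (Max e)"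

lemma kk2: "kk {x,y} = key (min x y) (max x y)"
  unfolding kk_def by simp

lemma key_t0: "v < 13 \<Longrightarrow> key u v = (0,0,0,0,0)"
  unfolding key_def by simp

lemma key_t1a: "b < 16 \<Longrightarrow> key 12 (13+16*i+b) = (1,i,0,0,0)"
  unfolding key_def by simp

lemma key_t1b: "a < 16 \<Longrightarrow> b < 16 \<Longrightarrow> key (13+16*i+a) (13+16*i+b) = (1,i,0,0,0)"
  unfolding key_def by simp

lemma key_t2: "x < 4 \<Longrightarrow> a < 4 \<Longrightarrow> y < 4 \<Longrightarrow> b < 3 \<Longrightarrow> key (4*b+y) (13+16*i+4*a+x) = (2,i,0,a,b)"
  unfolding key_def by simp

lemma key_t3: "i < j \<Longrightarrow> x < 4 \<Longrightarrow> a < 4 \<Longrightarrow> y < 4 \<Longrightarrow> b < 4 \<Longrightarrow>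
   key (13+16*i+4*a+x) (13+16*j+4*b+y) = (3,i,j,a,b)"
  unfolding key_def by simp

type_synonym kt = "nat \<times> nat \<times> nat \<times> nat \<times> nat"

fun gm :: "kt \<Rightarrow> nat \<Rightarrow> nat" where
 "gm (t,i,j,a,b) x = (if t = 0 then x else if t = 1 then (if x = 16 then 12 else 13+16*i+x)
   else if t = 2 then (if x < 4 then 13+16*i+4*a+x else 4*b+(x-4))
   else (if x < 4 then 13+16*i+4*a+x else 13+16*j+4*b+(x-4)))"

definition bl :: "kt \<Rightarrow> (nat list \<times> nat list) list" where
 "bl \<beta> = (if fst \<beta> = 0 then P13 else if fst \<beta> = 1 then P17 else P44)"

definition ms :: "kt \<Rightarrow> nat" where
 "ms \<beta> = (if fst \<beta> = 0 then 13 else if fst \<beta> = 1 then 17 else 8)"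

definition BB :: "nat \<Rightarrow> kt set" where
 "BB k = {(0,0,0,0,0)} \<union> {(1,i,0,0,0)|i. i<k} \<union> {(2,i,0,a,b)|i a b. i<k \<and> a<4 \<and> b<3}
    \<union> {(3,i,j,a,b)|i j a b. i<j \<and> j<k \<and> a<4 \<and> b<4}"

lemma R1: "chk1 (ms \<beta>) (bl \<beta>) \<and> chk2 (bl \<beta>)"
  unfolding ms_def bl_def using C13a C17a C44a by auto

lemma R2: assumes "\<beta> \<in> BB k" shows "inj_on (gm \<beta>) {..<ms \<beta>}"
  using assms unfolding BB_def ms_def by (auto simp: inj_on_def split: if_splits)

lemma R3: assumes "\<beta> \<in> BB k" shows "gm \<beta> ` {..<ms \<beta>} \<subseteq> {..<16*k+13}"
  using assms unfolding BB_def ms_def by (auto split: if_splits)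

lemma ae13: "(a,b) \<in> set (allE P13) \<Longrightarrow> (a,b) \<notin> set L13 \<and> (b,a) \<notin> set L13 \<and> a < 13 \<and> b < 13 \<and> a \<noteq> b"
  using C13c unfolding list_all_iff by fastforce
lemma ae17: "(a,b) \<in> set (allE P17) \<Longrightarrow> a < 17 \<and> b < 17 \<and> a \<noteq> b"
  using C17c unfolding list_all_iff by fastforce
lemma ae44: "(a,b) \<in> set (allE P44) \<Longrightarrow> (a<4 \<and> 4\<le>b \<and> b<8) \<or> (b<4 \<and> 4\<le>a \<and> a<8)"
  using C44c unfolding list_all_iff by fastforce

lemma R4_1: assumes "a < 17" "b < 17" "a \<noteq> b"
  shows "kk {gm (1,i,0,0,0) a, gm (1,i,0,0,0) b} = (1,i,0,0,0)"
proof -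
  have sym: "kk {gm (1,i,0,0,0) a, gm (1,i,0,0,0) b} = kk {gm (1,i,0,0,0) b, gm (1,i,0,0,0) a}"
    by (simp add: insert_commute)
  have main: "kk {gm (1,i,0,0,0) a, gm (1,i,0,0,0) b} = (1,i,0,0,0)" if "a < b" "b < 17" for a b
  proof (cases "b = 16")
    case True
    then have "kk {gm (1,i,0,0,0) a, gm (1,i,0,0,0) b} = key 12 (13+16*i+a)"
      using that by (simp add: kk2)
    then show ?thesis using key_t1a[of a i] that by simp
  next
    case False
    then have "kk {gm (1,i,0,0,0) a, gm (1,i,0,0,0) b} = key (13+16*i+a) (13+16*i+b)"
      using that by (simp add: kk2)
    then show ?thesis using key_t1b[of a b i] that False by simp
  qed
  show ?thesis
  proof (cases "a < b")
    case True then show ?thesis using main assms by simp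
  next
    case False then have "b < a" using assms by simp
    then show ?thesis using main[of b a] assms sym by simp
  qed
qed

lemma R4_2: assumes "x < 4" "4 \<le> y" "y < 8" "A < 4" "B < 3"
  shows "kk {gm (2,i,0,A,B) x, gm (2,i,0,A,B) y} = (2,i,0,A,B)"
    "kk {gm (2,i,0,A,B) y, gm (2,i,0,A,B) x} = (2,i,0,A,B)"
proof -
  have "kk {gm (2,i,0,A,B) x, gm (2,i,0,A,B) y} = key (4*B+(y-4)) (13+16*i+4*A+x)"
    using assms by (simp add: kk2)
  also have "\<dots> = (2,i,0,A,B)" using key_t2[of x A "y-4" B i] assms by simp
  finally show "kk {gm (2,i,0,A,B) x, gm (2,i,0,A,B) y} = (2,i,0,A,B)" .
  then show "kk {gm (2,i,0,A,B) y, gm (2,i,0,A,B) x} = (2,i,0,A,B)" by (simp add: insert_commute)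
qed

lemma R4_3: assumes "x < 4" "4 \<le> y" "y < 8" "A < 4" "B < 4" "i < j"
  shows "kk {gm (3,i,j,A,B) x, gm (3,i,j,A,B) y} = (3,i,j,A,B)"
    "kk {gm (3,i,j,A,B) y, gm (3,i,j,A,B) x} = (3,i,j,A,B)"
proof -
  have "kk {gm (3,i,j,A,B) x, gm (3,i,j,A,B) y} = key (13+16*i+4*A+x) (13+16*j+4*B+(y-4))"
    using assms by (simp add: kk2)
  also have "\<dots> = (3,i,j,A,B)" using key_t3[of i j x A "y-4" B] assms by simp
  finally show "kk {gm (3,i,j,A,B) x, gm (3,i,j,A,B) y} = (3,i,j,A,B)" .
  then show "kk {gm (3,i,j,A,B) y, gm (3,i,j,A,B) x} = (3,i,j,A,B)" by (simp add: insert_commute)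
qed

lemma R4: assumes "\<beta> \<in> BB k" "(a,b) \<in> set (allE (bl \<beta>))"
  shows "kk {gm \<beta> a, gm \<beta> b} = \<beta>"
proof -
  consider "\<beta> = (0,0,0,0,0)" | i where "\<beta> = (1,i,0,0,0)" | i A B where "\<beta> = (2,i,0,A,B)" "A<4" "B<3"
    | i j A B where "\<beta> = (3,i,j,A,B)" "i<j" "A<4" "B<4"
    using assms(1) unfolding BB_def by blast
  then show ?thesis
  proof cases
    case 1
    then have "a < 13" "b < 13" using ae13 assms(2) by (simp_all add: bl_def)
    then show ?thesis using 1 by (simp add: kk2 key_t0)
  next
    case (2 i)
    then show ?thesis using ae17[of a b] assms(2) R4_1[of a b i] by (simp add: bl_def)
  next
    case (3 i A B)
    then have "(a<4 \<and> 4\<le>b \<and> b<8) \<or> (b<4 \<and> 4\<le>a \<and> a<8)" using ae44 assms(2) by (simp add: bl_def)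
    then show ?thesis using R4_2[of a b A B i] R4_2[of b a A B i] 3 by auto
  next
    case (4 i j A B)
    then have "(a<4 \<and> 4\<le>b \<and> b<8) \<or> (b<4 \<and> 4\<le>a \<and> a<8)" using ae44 assms(2) by (simp add: bl_def)
    then show ?thesis using R4_3[of a b A B i j] R4_3[of b a A B i j] 4 by auto
  qed
qed

definition Lset :: "nat set set" where "Lset = (\<lambda>(a,b). {a,b}) ` set L13"

definition cov :: "kt \<Rightarrow> nat \<Rightarrow> nat \<Rightarrow> bool" where
 "cov \<beta> x y \<longleftrightarrow> (\<exists>p\<in>set (bl \<beta>). hasE x y (fst p)) \<and> (\<exists>p\<in>set (bl \<beta>). hasE x y (snd p))"

lemma cov13: "x < y \<Longrightarrow> y < 13 \<Longrightarrow> (x,y) \<notin> set L13 \<Longrightarrow> cov (0,0,0,0,0) x y"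
  using C13b unfolding cov_def bl_def list_all_iff list_ex_iff by fastforce

lemma cov17: "x < y \<Longrightarrow> y < 17 \<Longrightarrow> cov (1,i,0,0,0) x y"
  using C17b unfolding cov_def bl_def list_all_iff list_ex_iff by fastforce

lemma cov44: "x < 4 \<Longrightarrow> 4 \<le> y \<Longrightarrow> y < 8 \<Longrightarrow> t \<ge> 2 \<Longrightarrow> cov (t,i,j,a,b) x y"
  using C44b unfolding cov_def bl_def list_all_iff list_ex_iff by fastforce

lemma R5: assumes uv: "u < v" "v < 16*k+13" and nL: "{u,v} \<notin> Lset"
  shows "\<exists>\<beta>\<in>BB k. \<exists>x y. {gm \<beta> x, gm \<beta> y} = {u,v} \<and> cov \<beta> x y"
proof (cases "v < 13")
  case True
  have "(u,v) \<notin> set L13" using nL unfolding Lset_def by force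
  then have "cov (0,0,0,0,0) u v" using cov13 uv True by blast
  moreover have "(0,0,0,0,0) \<in> BB k" unfolding BB_def by blast
  ultimately show ?thesis by force
next
  case False
  define i where "i = (v-13) div 16"
  define r where "r = (v-13) mod 16"
  have v: "v = 13+16*i+r" "r < 16" using False unfolding i_def r_def by auto
  have ik: "i < k" using v uv by simp
  consider "u = 12" | "u < 12" | "u \<ge> 13" "(u-13) div 16 = i" | "u \<ge> 13" "(u-13) div 16 \<noteq> i" by linarith
  then show ?thesis
  proof cases
    case 1
    have b: "(1,i,0,0,0) \<in> BB k" unfolding BB_def using ik by blast
    have "{gm (1,i,0,0,0) r, gm (1,i,0,0,0) 16} = {u,v}" using v 1 by auto
    moreover have "cov (1,i,0,0,0) r 16" using cov17 v by simp
    ultimately show ?thesis using b by blast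
  next
    case 2
    define A where "A = r div 4"
    define B where "B = u div 4"
    have AB: "A < 4" "B < 3" using v 2 unfolding A_def B_def by auto
    have b: "(2,i,0,A,B) \<in> BB k" unfolding BB_def using ik AB by blast
    have g1: "gm (2,i,0,A,B) (r mod 4) = v" using v unfolding A_def by simp
    have g2: "gm (2,i,0,A,B) (4 + u mod 4) = u" unfolding B_def by simp
    have "{gm (2,i,0,A,B) (r mod 4), gm (2,i,0,A,B) (4 + u mod 4)} = {u,v}" unfolding g1 g2 by (simp add: insert_commute)
    moreover have "cov (2,i,0,A,B) (r mod 4) (4 + u mod 4)" by (rule cov44) auto
    ultimately show ?thesis using b by blast
  next
    case 3
    define r' where "r' = (u-13) mod 16"
    have u: "u = 13+16*i+r'" "r' < 16" using 3 unfolding r'_def by auto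
    have rr: "r' < r" using u v uv by simp
    have b: "(1,i,0,0,0) \<in> BB k" unfolding BB_def using ik by blast
    have "{gm (1,i,0,0,0) r', gm (1,i,0,0,0) r} = {u,v}" using v u rr by auto
    moreover have "cov (1,i,0,0,0) r' r" using cov17 v rr by simp
    ultimately show ?thesis using b by blast
  next
    case 4
    define i' where "i' = (u-13) div 16"
    define r' where "r' = (u-13) mod 16"
    have u: "u = 13+16*i'+r'" "r' < 16" using 4 unfolding r'_def i'_def by auto
    have ii: "i' < i"
    proof (rule ccontr)
      assume "\<not> i' < i"
      then have "i' > i" using 4 unfolding i'_def by simp
      then have "u > v" using u v by simp
      then show False using uv by simp
    qed
    define A where "A = r' div 4"
    define B where "B = r div 4"
    have AB: "A < 4" "B < 4" using v u unfolding A_def B_def by auto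
    have b: "(3,i',i,A,B) \<in> BB k" unfolding BB_def using ik AB ii by blast
    have g1: "gm (3,i',i,A,B) (r' mod 4) = u" using u unfolding A_def by simp
    have g2: "gm (3,i',i,A,B) (4 + r mod 4) = v" using v unfolding B_def by simp
    have "{gm (3,i',i,A,B) (r' mod 4), gm (3,i',i,A,B) (4 + r mod 4)} = {u,v}" unfolding g1 g2 by simp
    moreover have "cov (3,i',i,A,B) (r' mod 4) (4 + r mod 4)" by (rule cov44) auto
    ultimately show ?thesis using b by blast
  qed
qed

lemma ce_card: "finite X \<Longrightarrow> card (complete_edges X) = card X choose 2"
proof -
  assume f: "finite X"
  have "complete_edges X = {A. A \<subseteq> X \<and> card A = 2}"
    unfolding complete_edges_def card_2_iff by blast
  then show ?thesis using n_subsets[OF f, of 2] by simp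
qed

lemma mod86: "(c::nat) = 8*M + 6 \<Longrightarrow> c mod 8 = 6" by simp

lemma cardE: "card (complete_edges {..<16*(k::nat)+13}) mod 8 = 6"
proof -
  have "card (complete_edges {..<16*k+13}) = (16*k+13)*(16*k+12) div 2"
    using ce_card[of "{..<16*k+13}"] by (simp add: choose_two add.commute)
  also have "(16*k+13)*(16*k+12) = 2 * (8*(16*k*k+25*k+9) + 6)" by (simp add: algebra_simps)
  finally have "card (complete_edges {..<16*k+13}) = 8*(16*k*k+25*k+9) + 6" by simp
  then show ?thesis by (rule mod86)
qed

lemma Lset_eq: "Lset = {{0,1},{1,2},{0,2},{3,4},{4,5},{3,5}}"
  unfolding Lset_def L13_def by simp

lemma cardL: "card Lset = 6"
  unfolding Lset_eq by (simp add: doubleton_eq_iff)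

lemma LE: "Lset \<subseteq> complete_edges {..<16*(k::nat)+13}"
  unfolding Lset_eq complete_edges_def by force

lemma kkL: "e \<in> Lset \<Longrightarrow> kk e = (0,0,0,0,0)"
  unfolding Lset_eq by (auto simp: kk2 key_t0)

definition PP :: "nat \<Rightarrow> (nat list \<times> nat list) set" where
 "PP k = (\<Union>\<beta>\<in>BB k. mapQ (gm \<beta>) (bl \<beta>))"

lemma PP1: assumes "(c,d) \<in> PP k"
  shows "length c = 8 \<and> distinct c \<and> set c \<subseteq> {..<16*k+13} \<and> length d = 8 \<and> distinct d
             \<and> set d = set c \<and> cycle_edges c \<inter> cycle_edges d = {}"
proof -
  obtain \<beta> where b: "\<beta> \<in> BB k" "(c,d) \<in> mapQ (gm \<beta>) (bl \<beta>)" using assms unfolding PP_def by blast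
  show ?thesis using block_a[OF conjunct1[OF R1] R2[OF b(1)] R3[OF b(1)] b(2)] .
qed

lemma kk_edge: assumes "\<beta> \<in> BB k" "p \<in> mapQ (gm \<beta>) (bl \<beta>)" "e \<in> cycle_edges (fst p) \<union> cycle_edges (snd p)"
  shows "kk e = \<beta>"
proof -
  obtain a b where ab: "(a,b) \<in> set (allE (bl \<beta>))" "e = {gm \<beta> a, gm \<beta> b}" using block_c[OF assms(2,3)] by blast
  show ?thesis using R4[OF assms(1) ab(1)] ab(2) by simp
qed

lemma PP2: assumes "p \<in> PP k" "q \<in> PP k" "p \<noteq> q"
  shows "cycle_edges (fst p) \<inter> cycle_edges (fst q) = {} \<and> cycle_edges (snd p) \<inter> cycle_edges (snd q) = {}"
proof -
  obtain \<beta> where b: "\<beta> \<in> BB k" "p \<in> mapQ (gm \<beta>) (bl \<beta>)" using assms(1) unfolding PP_def by blast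
  obtain \<gamma> where g: "\<gamma> \<in> BB k" "q \<in> mapQ (gm \<gamma>) (bl \<gamma>)" using assms(2) unfolding PP_def by blast
  show ?thesis
  proof (cases "\<beta> = \<gamma>")
    case True
    then show ?thesis using block_b[OF conjunct1[OF R1] conjunct2[OF R1] R2[OF b(1)] b(2) _ assms(3)] g(2) by simp
  next
    case False
    have "e \<notin> cycle_edges (fst p) \<union> cycle_edges (snd p) \<or> e \<notin> cycle_edges (fst q) \<union> cycle_edges (snd q)" for e
      using kk_edge[OF b] kk_edge[OF g] False by metis
    then show ?thesis by blast
  qed
qed

lemma PPsub: assumes "p \<in> PP k" "e \<in> cycle_edges (fst p) \<union> cycle_edges (snd p)"
  shows "e \<in> complete_edges {..<16*k+13} - Lset"
proof -
  obtain \<beta> where b: "\<beta> \<in> BB k" "p \<in> mapQ (gm \<beta>) (bl \<beta>)" using assms(1) unfolding PP_def by blast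
  have h: "length (fst p) = 8 \<and> distinct (fst p) \<and> set (fst p) \<subseteq> {..<16*k+13} \<and> length (snd p) = 8 \<and> distinct (snd p)
             \<and> set (snd p) = set (fst p)" using PP1[of "fst p" "snd p" k] assms(1) by simp
  have "cycle_edges (fst p) \<subseteq> complete_edges {..<16*k+13}" using h by (intro cyc_sub) auto
  moreover have "cycle_edges (snd p) \<subseteq> complete_edges {..<16*k+13}" using h by (intro cyc_sub) auto
  ultimately have eE: "e \<in> complete_edges {..<16*k+13}" using assms(2) by blast
  have "e \<notin> Lset"
  proof
    assume eL: "e \<in> Lset"
    have k0: "kk e = (0,0,0,0,0)" using kkL[OF eL] .
    have "kk e = \<beta>" using kk_edge[OF b assms(2)] .
    then have b0: "\<beta> = (0,0,0,0,0)" using k0 by simp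
    obtain a c where ac: "(a,c) \<in> set (allE (bl \<beta>))" "e = {gm \<beta> a, gm \<beta> c}" using block_c[OF b(2) assms(2)] by blast
    have ac': "(a,c) \<in> set (allE P13)" "e = {a,c}" using ac b0 by (simp_all add: bl_def)
    have n1: "(a,c) \<notin> set L13" "(c,a) \<notin> set L13" using ae13[OF ac'(1)] by simp_all
    from eL obtain x y where xy: "(x,y) \<in> set L13" "e = {x,y}" unfolding Lset_def by auto
    have "(a,c) = (x,y) \<or> (c,a) = (x,y)" using xy(2) ac'(2) by (auto simp: doubleton_eq_iff)
    then show False using n1 xy(1) by auto
  qed
  then show ?thesis using eE by blast
qed

lemma PPcov: assumes "e \<in> complete_edges {..<16*k+13} - Lset"
  shows "(\<exists>p\<in>PP k. e \<in> cycle_edges (fst p)) \<and> (\<exists>p\<in>PP k. e \<in> cycle_edges (snd p))"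
proof -
  obtain u v where uv: "e = {u,v}" "u < v" "v < 16*k+13"
  proof -
    obtain x y where xy: "e = {x,y}" "x \<in> {..<16*k+13}" "y \<in> {..<16*k+13}" "x \<noteq> y"
      using assms unfolding complete_edges_def by blast
    show ?thesis
    proof (cases "x < y")
      case True then show ?thesis using that xy by auto
    next
      case False then have "y < x" using xy by simp
      then show ?thesis using that[of y x] xy by (auto simp: insert_commute)
    qed
  qed
  have nL: "{u,v} \<notin> Lset" using assms uv by simp
  obtain \<beta> x y where b: "\<beta> \<in> BB k" "{gm \<beta> x, gm \<beta> y} = {u,v}" "cov \<beta> x y" using R5[OF uv(2,3) nL] by blast
  obtain p0 where p0: "p0 \<in> set (bl \<beta>)" "hasE x y (fst p0)" using b(3) unfolding cov_def by blast
  obtain q0 where q0: "q0 \<in> set (bl \<beta>)" "hasE x y (snd q0)" using b(3) unfolding cov_def by blast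
  obtain p where p: "p \<in> mapQ (gm \<beta>) (bl \<beta>)" "{gm \<beta> x, gm \<beta> y} \<in> cycle_edges (fst p)" using block_d1[OF p0] by blast
  obtain q where q: "q \<in> mapQ (gm \<beta>) (bl \<beta>)" "{gm \<beta> x, gm \<beta> y} \<in> cycle_edges (snd q)" using block_d2[OF q0] by blast
  have "p \<in> PP k" "q \<in> PP k" using p(1) q(1) b(1) unfolding PP_def by blast+
  then show ?thesis using p(2) q(2) b(2) uv(1) by auto
qed

theorem lemma3p7:
  fixes n :: nat
  assumes "n mod 16 = 13"
  shows "\<exists>CC L. is_max_8cycle_packing {..<n} CC L \<and> almost_2perfect {..<n} CC L"
proof -
  define k where "k = n div 16"
  have n: "n = 16*k+13" using assms unfolding k_def by (metis add.commute div_mult_mod_eq mult.commute)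
  show ?thesis unfolding n
  proof (rule main_abstract[where P = "PP k" and L = Lset])
    show "finite {..<16*k+13}" by simp
    show "\<And>c d. (c, d) \<in> PP k \<Longrightarrow> length c = 8 \<and> distinct c \<and> set c \<subseteq> {..<16*k+13} \<and> length d = 8 \<and> distinct d
             \<and> set d = set c \<and> cycle_edges c \<inter> cycle_edges d = {}" by (rule PP1)
    show "\<And>p q. p \<in> PP k \<Longrightarrow> q \<in> PP k \<Longrightarrow> p \<noteq> q \<Longrightarrow> cycle_edges (fst p) \<inter> cycle_edges (fst q) = {}"
      using PP2 by blast
    show "\<And>p q. p \<in> PP k \<Longrightarrow> q \<in> PP k \<Longrightarrow> p \<noteq> q \<Longrightarrow> cycle_edges (snd p) \<inter> cycle_edges (snd q) = {}"
      using PP2 by blast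
    show "(\<Union>p\<in>PP k. cycle_edges (fst p)) = complete_edges {..<16*k+13} - Lset"
      using PPsub[of _ k] PPcov[of _ k] by blast
    show "(\<Union>p\<in>PP k. cycle_edges (snd p)) = complete_edges {..<16*k+13} - Lset"
      using PPsub[of _ k] PPcov[of _ k] by blast
    show "Lset \<subseteq> complete_edges {..<16*k+13}" by (rule LE)
    show "card Lset = 6" by (rule cardL)
    show "card (complete_edges {..<16*k+13}) mod 8 = 6" by (rule cardE)
  qed
qed


end
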